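(* Every locally Ramsey topological space is $\alpha_{3^-}$, and every $\alpha_{3^-}$ topological space is $\alpha_3$.
   Context: Convention: a "sequence" is a countably infinite set; a countably infinite set $A$ in a space $X$ converges to $x\in X$ if $x\notin A$ and every neighborhood of $x$ contains all but finitely many elements of $A$. $\lim_m x_{nm}=x$ means $x_{nm}\neq x$ for all $m$ and every neighborhood of $x$ contains $x_{nm}$ for all but finitely many $m$. A space $X$ is locally Ramsey if for each $x\in X$, whenever $\lim_m x_{nm}=x$ for all $n$, there is an infinite $I\subseteq\mathbb N$ such that $\{x_{nm}: n,m\in I,\ n<m\}$ converges to $x$. $X$ is $\alpha_{3^-}$ if for each $x\in X$, whenever $\lim_m x_{nm}=x$ for all $n$, there are infinite $I,J\subseteq\mathbb N$ such that $\{x_{nm}: n\in I,\ m\in J,\ n<m\}$ converges to $x$. $X$ is $\alpha_3$ if for each $x\in X$ and all pairwise disjoint sequences $S_1,S_2,\dots\subseteq X$ each converging to $x$, there is a sequence $S\subseteq\bigcup_nS_n$ converging to $x$ such that $S_n\cap S$ is infinite for infinitely many $n$. *)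

theory Defs
  imports "HOL-Analysis.Analysis"
begin

definition set_converges :: "'a topology \<Rightarrow> 'a set \<Rightarrow> 'a \<Rightarrow> bool" where
  "set_converges X A x \<longleftrightarrow>
     A \<subseteq> topspace X \<and> countable A \<and> infinite A \<and> x \<in> topspace X \<and> x \<notin> A \<and>
     (\<forall>U. openin X U \<and> x \<in> U \<longrightarrow> finite (A - U))"

definition seq_lim :: "'a topology \<Rightarrow> (nat \<Rightarrow> 'a) \<Rightarrow> 'a \<Rightarrow> bool" where
  "seq_lim X s x \<longleftrightarrow>
     (\<forall>m. s m \<noteq> x) \<and>
     (\<forall>U. openin X U \<and> x \<in> U \<longrightarrow> finite {m. s m \<notin> U})"

definition locally_ramsey :: "'a topology \<Rightarrow> bool" where
  "locally_ramsey X \<longleftrightarrow>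
     (\<forall>x \<in> topspace X. \<forall>s :: nat \<Rightarrow> nat \<Rightarrow> 'a.
        (\<forall>n m. s n m \<in> topspace X) \<and> (\<forall>n. seq_lim X (s n) x) \<longrightarrow>
        (\<exists>I. infinite I \<and>
             set_converges X {s n m | n m. n \<in> I \<and> m \<in> I \<and> n < m} x))"

definition alpha3_minus :: "'a topology \<Rightarrow> bool" where
  "alpha3_minus X \<longleftrightarrow>
     (\<forall>x \<in> topspace X. \<forall>s :: nat \<Rightarrow> nat \<Rightarrow> 'a.
        (\<forall>n m. s n m \<in> topspace X) \<and> (\<forall>n. seq_lim X (s n) x) \<longrightarrow>
        (\<exists>I J. infinite I \<and> infinite J \<and>
             set_converges X {s n m | n m. n \<in> I \<and> m \<in> J \<and> n < m} x))"

definition alpha3 :: "'a topology \<Rightarrow> bool" where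
  "alpha3 X \<longleftrightarrow>
     (\<forall>x \<in> topspace X. \<forall>S :: nat \<Rightarrow> 'a set.
        (\<forall>n m. n \<noteq> m \<longrightarrow> S n \<inter> S m = {}) \<and> (\<forall>n. set_converges X (S n) x) \<longrightarrow>
        (\<exists>T. T \<subseteq> (\<Union>n. S n) \<and> set_converges X T x \<and>
             infinite {n. infinite (S n \<inter> T)}))"

end

theory Submission
  imports Defs
begin

lemma part1: fixes X :: "'a topology" assumes "locally_ramsey X" shows "alpha3_minus X"
  unfolding locally_ramsey_def alpha3_minus_def
proof (intro ballI allI impI)
  fix x and s :: "nat \<Rightarrow> nat \<Rightarrow> 'a"
  assume "x \<in> topspace X" "(\<forall>n m. s n m \<in> topspace X) \<and> (\<forall>n. seq_lim X (s n) x)"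
  then obtain I where "infinite I" "set_converges X {s n m | n m. n \<in> I \<and> m \<in> I \<and> n < m} x"
    using assms unfolding locally_ramsey_def by blast
  then show "\<exists>I J. infinite I \<and> infinite J \<and>
             set_converges X {s n m | (n::nat) (m::nat). n \<in> I \<and> m \<in> J \<and> n < m} x" by blast
qed

lemma part2:
  assumes A: "alpha3_minus X" shows "alpha3 X"
  unfolding alpha3_def
proof (intro ballI allI impI, elim conjE)
  fix x and S :: "nat \<Rightarrow> 'a set" assume x: "x \<in> topspace X" and disj: "\<forall>n m. n \<noteq> m \<longrightarrow> S n \<inter> S m = {}"
    and conv: "\<forall>n. set_converges X (S n) x"
  define s where "s n = from_nat_into (S n)" for n
  have bij: "bij_betw (s n) UNIV (S n)" for n
    using conv unfolding s_def set_converges_def by (meson bij_betw_from_nat_into)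
  have inj: "inj (s n)" for n using bij[of n] by (simp add: bij_betw_def)
  have rng: "s n m \<in> S n" for n m using bij[of n] by (auto simp: bij_betw_def)
  have top: "\<forall>n m. s n m \<in> topspace X" using rng conv unfolding set_converges_def by blast
  have sl: "seq_lim X (s n) x" for n
    unfolding seq_lim_def
  proof (intro conjI allI impI)
    fix m show "s n m \<noteq> x" using rng[of n m] conv unfolding set_converges_def by metis
  next
    fix U assume "openin X U \<and> x \<in> U"
    then have "finite (S n - U)" using conv unfolding set_converges_def by blast
    moreover have "{m. s n m \<notin> U} = s n -` (S n - U)" using rng by auto
    ultimately show "finite {m. s n m \<notin> U}" using finite_vimageI inj by metis
  qed
  obtain I J :: "nat set" where IJ: "infinite I" "infinite J"
    and T: "set_converges X {s n m | (n::nat) (m::nat). n \<in> I \<and> m \<in> J \<and> n < m} x"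
    using A x top sl unfolding alpha3_minus_def by blast
  define T where "T = {s n m | (n::nat) (m::nat). n \<in> I \<and> m \<in> J \<and> n < m}"
  have sub: "T \<subseteq> (\<Union>n. S n)" unfolding T_def using rng by blast
  have "I \<subseteq> {n. infinite (S n \<inter> T)}"
  proof
    fix n assume n: "n \<in> I"
    have "infinite (J - {..n})" using IJ(2) by simp
    then have "infinite (s n ` (J - {..n}))" using inj[of n]
      by (metis finite_imageD inj_on_subset subset_UNIV)
    moreover have "s n ` (J - {..n}) \<subseteq> S n \<inter> T" unfolding T_def using rng n by force
    ultimately show "n \<in> {n. infinite (S n \<inter> T)}" using infinite_super by blast
  qed
  then have "infinite {n. infinite (S n \<inter> T)}" using IJ(1) infinite_super by blast
  then show "\<exists>T. T \<subseteq> (\<Union>n. S n) \<and> set_converges X T x \<and> infinite {n. infinite (S n \<inter> T)}"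
    using sub T T_def by blast
qed

theorem corollary2p7:
  fixes X :: "'a topology"
  shows "(locally_ramsey X \<longrightarrow> alpha3_minus X) \<and> (alpha3_minus X \<longrightarrow> alpha3 X)"
  using part1 part2 by blast

end
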